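(* Let $n\in\mathbb{N}$, $\varkappa\in\mathbb{N}^n$, $N=|\varkappa|$, and $\lambda$ a partition of length $\le N$. Then \[ G_\lambda(y,\varkappa)=J_\lambda\bigl(y^{[\varkappa]}\bigr)\,M(y,\varkappa). \]
   Context: $\hom_m$, $\operatorname{e}_m$: complete homogeneous and elementary symmetric polynomials, zero for negative degree (and $\operatorname{e}_m=0$ when $m$ exceeds the number of variables). Partitions are extended by zeros to length $N$. For a list of nonnegative integers $\mu$, $y^{[\mu]}$ is the list in which $y_1$ is repeated $\mu_1$ times, then $y_2$ repeated $\mu_2$ times, etc.; $b_q$ is the $q$th standard unit vector in $\mathbb{Z}^n$. Each $p\in\{1,\ldots,N\}$ is written uniquely as $p=\varkappa_1+\cdots+\varkappa_{q-1}+r$ with $1\le q\le n$, $1\le r\le\varkappa_q$. Definitions (all $N\times N$, indices in $\{1,\ldots,N\}$, $(q,r)$ associated to $p$): $J_\lambda(x)=[\hom_{\lambda_j-j+k}(x)]_{j,k=1}^N$ (Jacobi–Trudi matrix); $M(y,\varkappa)_{k,p}=(-1)^{N-k-r+1}\operatorname{e}_{N-k-r+1}\bigl(y^{[\varkappa-rb_q]}\bigr)$; $G_\lambda(y,\varkappa)_{j,p}=\binom{N+\lambda_j-j}{r-1}y_q^{N+\lambda_j-j-r+1}$ if $N+\lambda_j-j-r+1\ge0$, and $0$ otherwise. *)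

theory Defs
  imports "HOL-Library.FuncSet"
begin

definition hom :: "int \<Rightarrow> 'a::comm_ring_1 list \<Rightarrow> 'a" where
  "hom m xs = (if m < 0 then 0 else
     (\<Sum>f\<in>{f. f \<in> {..<length xs} \<rightarrow>\<^sub>E {0..nat m} \<and> sum f {..<length xs} = nat m}.
        \<Prod>i<length xs. xs ! i ^ f i))"

text \<open>Elementary symmetric polynomial of degree m evaluated at xs; zero for negative degree
  and (automatically) for degree exceeding the number of variables.\<close>
definition elem :: "int \<Rightarrow> 'a::comm_ring_1 list \<Rightarrow> 'a" where
  "elem m xs = (if m < 0 then 0 else
     (\<Sum>S\<in>{S. S \<subseteq> {..<length xs} \<and> card S = nat m}. \<Prod>i\<in>S. xs ! i))"

text \<open>y^[mu]: y_1 repeated mu_1 times, ..., y_n repeated mu_n times (1-based indices).\<close>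
definition rep_list :: "nat \<Rightarrow> (nat \<Rightarrow> 'a) \<Rightarrow> (nat \<Rightarrow> nat) \<Rightarrow> 'a list" where
  "rep_list n y mu = concat (map (\<lambda>q. replicate (mu q) (y q)) [1..<Suc n])"

definition qr :: "nat \<Rightarrow> (nat \<Rightarrow> nat) \<Rightarrow> nat \<Rightarrow> nat \<times> nat" where
  "qr n kappa p = (THE (q, r). 1 \<le> q \<and> q \<le> n \<and> 1 \<le> r \<and> r \<le> kappa q \<and>
                      p = sum kappa {1..<q} + r)"

definition is_partition_len_le :: "nat \<Rightarrow> (nat \<Rightarrow> nat) \<Rightarrow> bool" where
  "is_partition_len_le N lam \<longleftrightarrow>
     (\<forall>i j. 1 \<le> i \<longrightarrow> i \<le> j \<longrightarrow> lam j \<le> lam i) \<and> (\<forall>j>N. lam j = 0)"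

definition JT :: "(nat \<Rightarrow> nat) \<Rightarrow> 'a::comm_ring_1 list \<Rightarrow> nat \<Rightarrow> nat \<Rightarrow> 'a" where
  "JT lam x j k = hom (int (lam j) - int j + int k) x"

definition Mmat :: "nat \<Rightarrow> (nat \<Rightarrow> 'a::comm_ring_1) \<Rightarrow> (nat \<Rightarrow> nat) \<Rightarrow> nat \<Rightarrow> nat \<Rightarrow> 'a" where
  "Mmat n y kappa k p =
     (let N = sum kappa {1..n}; (q, r) = qr n kappa p;
          d = int N - int k - int r + 1
      in (-1) ^ nat d * elem d (rep_list n y (kappa(q := kappa q - r))))"

definition Gmat :: "nat \<Rightarrow> (nat \<Rightarrow> nat) \<Rightarrow> (nat \<Rightarrow> 'a::comm_ring_1) \<Rightarrow> (nat \<Rightarrow> nat) \<Rightarrow> nat \<Rightarrow> nat \<Rightarrow> 'a" where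
  "Gmat n lam y kappa j p =
     (let N = sum kappa {1..n}; (q, r) = qr n kappa p;
          d = int N + int (lam j) - int j - int r + 1
      in if d \<ge> 0 then of_nat ((N + lam j - j) choose (r - 1)) * y q ^ nat d else 0)"

end

theory Submission imports Defs "HOL-Computational_Algebra.Formal_Power_Series"
begin
unbundle fps_syntax

definition Fset :: "nat \<Rightarrow> nat \<Rightarrow> (nat \<Rightarrow> nat) set" where
  "Fset L m = {f. f \<in> {..<L} \<rightarrow>\<^sub>E {0..m} \<and> sum f {..<L} = m}"

lemma hom_nat: "hom (int m) xs = (\<Sum>f\<in>Fset (length xs) m. \<Prod>i<length xs. xs ! i ^ f i)"
  by (simp add: hom_def Fset_def)

lemma finite_Fset: "finite (Fset L m)"
proof -
  have "Fset L m \<subseteq> {..<L} \<rightarrow>\<^sub>E {0..m}" by (auto simp: Fset_def)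
  then show ?thesis by (rule finite_subset) (simp add: finite_PiE)
qed

lemma hom_nil: "hom (int m) [] = (if m = 0 then 1 else 0)"
proof -
  have "Fset 0 m = (if m = 0 then {\<lambda>_. undefined} else {})"
    by (auto simp: Fset_def)
  then show ?thesis by (simp add: hom_nat)
qed

lemma hom_snoc: "hom (int m) (xs @ [c]) = (\<Sum>a\<le>m. c ^ a * hom (int (m - a)) xs)"
proof -
  define L where "L = length xs"
  define w where "w = (\<lambda>f. \<Prod>i<Suc L. (xs @ [c]) ! i ^ f i)"
  have "hom (int m) (xs @ [c]) = sum w (Fset (Suc L) m)"
    by (simp add: hom_nat w_def L_def)
  also have "\<dots> = (\<Sum>a\<in>{..m}. sum w {f\<in>Fset (Suc L) m. f L = a})"
  proof -
    have "(\<lambda>f. f L) ` Fset (Suc L) m \<subseteq> {..m}" by (auto simp: Fset_def PiE_def Pi_def)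
    then show ?thesis by (intro sum.group[symmetric] finite_Fset) auto
  qed
  also have "\<dots> = (\<Sum>a\<le>m. c ^ a * hom (int (m - a)) xs)"
  proof (rule sum.cong[OF refl])
    fix a assume a: "a \<in> {..m}"
    have "sum w {f\<in>Fset (Suc L) m. f L = a} = (\<Sum>g\<in>Fset L (m-a). c ^ a * (\<Prod>i<L. xs ! i ^ g i))"
    proof (rule sum.reindex_bij_witness[where i="\<lambda>g. g(L:=a)" and j="\<lambda>f. restrict f {..<L}"])
      fix f assume "f \<in> {f\<in>Fset (Suc L) m. f L = a}"
      then show "(restrict f {..<L})(L := a) = f"
        by (auto simp: Fset_def PiE_def extensional_def fun_eq_iff)
    next
      fix f assume f: "f \<in> {f\<in>Fset (Suc L) m. f L = a}"
      then have "sum f {..<Suc L} = m" "f L = a" by (auto simp: Fset_def)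
      then have s: "sum f {..<L} = m - a" by simp
      have "\<forall>i<L. f i \<le> sum f {..<L}" by (intro allI impI member_le_sum) auto
      with s f show "restrict f {..<L} \<in> Fset L (m - a)"
        by (auto simp: Fset_def PiE_def Pi_def)
    next
      fix g assume "g \<in> Fset L (m - a)"
      then show "restrict (g(L := a)) {..<L} = g"
        by (auto simp: Fset_def PiE_def extensional_def fun_eq_iff)
    next
      fix g assume g: "g \<in> Fset L (m - a)"
      have "\<forall>i<L. g i \<le> sum g {..<L}" by (intro allI impI member_le_sum) auto
      moreover have "sum (g(L:=a)) {..<L} = sum g {..<L}" by (intro sum.cong) auto
      ultimately show "g(L := a) \<in> {f\<in>Fset (Suc L) m. f L = a}"
        using g a by (auto simp: Fset_def PiE_def Pi_def extensional_def less_Suc_eq)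
    next
      fix f assume "f \<in> {f\<in>Fset (Suc L) m. f L = a}"
      then have fL: "f L = a" by auto
      have "w f = (\<Prod>i<L. (xs @ [c]) ! i ^ f i) * c ^ f L"
        by (simp add: w_def L_def)
      also have "(\<Prod>i<L. (xs @ [c]) ! i ^ f i) = (\<Prod>i<L. xs ! i ^ restrict f {..<L} i)"
        by (intro prod.cong) (auto simp: L_def nth_append)
      finally show "c ^ a * (\<Prod>i<L. xs ! i ^ restrict f {..<L} i) = w f"
        using fL by (simp add: mult.commute)
    qed
    also have "\<dots> = c ^ a * hom (int (m - a)) xs"
      by (simp add: hom_nat L_def sum_distrib_left)
    finally show "sum w {f\<in>Fset (Suc L) m. f L = a} = c ^ a * hom (int (m - a)) xs" .
  qed
  finally show ?thesis .
qed

definition Sset :: "nat \<Rightarrow> nat \<Rightarrow> nat set set" where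
  "Sset L m = {S. S \<subseteq> {..<L} \<and> card S = m}"

lemma elem_nat: "elem (int m) xs = (\<Sum>S\<in>Sset (length xs) m. \<Prod>i\<in>S. xs ! i)"
  by (simp add: elem_def Sset_def)

lemma finite_Sset: "finite (Sset L m)"
  by (rule finite_subset[of _ "Pow {..<L}"]) (auto simp: Sset_def)

lemma elem_0: "elem 0 xs = 1"
proof -
  have "Sset (length xs) 0 = {{}}"
    by (force simp: Sset_def card_eq_0_iff dest: finite_subset[OF _ finite_lessThan])
  then show ?thesis using elem_nat[of 0 xs] by simp
qed

lemma elem_big: "length xs < m \<Longrightarrow> elem (int m) xs = 0"
proof -
  assume "length xs < m"
  then have "Sset (length xs) m = {}"
    by (auto simp: Sset_def dest!: card_mono[rotated, of _ "{..<length xs}"])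
  then show ?thesis by (simp add: elem_nat)
qed

lemma elem_snoc: "elem (int (Suc m)) (xs @ [c]) = elem (int (Suc m)) xs + c * elem (int m) xs"
proof -
  define L where "L = length xs"
  define w where "w = (\<lambda>S. \<Prod>i\<in>S. (xs @ [c]) ! i)"
  have "elem (int (Suc m)) (xs @ [c]) = sum w (Sset (Suc L) (Suc m))"
    unfolding elem_nat w_def L_def by simp
  also have "\<dots> = sum w {S\<in>Sset (Suc L) (Suc m). L \<notin> S} + sum w {S\<in>Sset (Suc L) (Suc m). L \<in> S}"
    by (subst sum.union_disjoint[symmetric]) (auto intro: finite_subset[OF _ finite_Sset] intro!: sum.cong)
  also have "{S\<in>Sset (Suc L) (Suc m). L \<notin> S} = Sset L (Suc m)"
    by (auto simp: Sset_def less_Suc_eq)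
  also have "sum w (Sset L (Suc m)) = elem (int (Suc m)) xs"
    unfolding elem_nat w_def L_def[symmetric]
    by (intro sum.cong refl prod.cong) (auto simp: Sset_def nth_append L_def)
  also have "sum w {S\<in>Sset (Suc L) (Suc m). L \<in> S} = (\<Sum>T\<in>Sset L m. c * (\<Prod>i\<in>T. xs ! i))"
  proof (rule sum.reindex_bij_witness[where i="\<lambda>T. insert L T" and j="\<lambda>S. S - {L}"])
    fix S assume "S \<in> {S\<in>Sset (Suc L) (Suc m). L \<in> S}"
    then show "insert L (S - {L}) = S" by auto
  next
    fix S assume S: "S \<in> {S\<in>Sset (Suc L) (Suc m). L \<in> S}"
    then have "finite S" by (auto simp: Sset_def intro: finite_subset[of _ "{..<Suc L}"])
    with S show "S - {L} \<in> Sset L m" by (auto simp: Sset_def less_Suc_eq)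
  next
    fix T assume "T \<in> Sset L m"
    then show "insert L T - {L} = T" by (auto simp: Sset_def)
  next
    fix T assume T: "T \<in> Sset L m"
    then have "finite T" "L \<notin> T" by (auto simp: Sset_def intro: finite_subset[of _ "{..<L}"])
    with T show "insert L T \<in> {S\<in>Sset (Suc L) (Suc m). L \<in> S}" by (auto simp: Sset_def)
  next
    fix S assume S: "S \<in> {S\<in>Sset (Suc L) (Suc m). L \<in> S}"
    then have fS: "finite S" by (auto simp: Sset_def intro: finite_subset[of _ "{..<Suc L}"])
    have "w S = (xs @ [c]) ! L * (\<Prod>i\<in>S - {L}. (xs @ [c]) ! i)"
      unfolding w_def using S fS by (simp add: prod.remove)
    also have "(\<Prod>i\<in>S - {L}. (xs @ [c]) ! i) = (\<Prod>i\<in>S - {L}. xs ! i)"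
      using S by (intro prod.cong) (auto simp: Sset_def nth_append L_def less_Suc_eq)
    finally show "c * (\<Prod>i\<in>S - {L}. xs ! i) = w S" by (simp add: L_def)
  qed
  also have "\<dots> = c * elem (int m) xs"
    by (simp add: elem_nat L_def sum_distrib_left)
  finally show ?thesis .
qed

definition Hf :: "'a::comm_ring_1 list \<Rightarrow> 'a fps" where
  "Hf xs = Abs_fps (\<lambda>m. hom (int m) xs)"
definition Ef :: "'a::comm_ring_1 list \<Rightarrow> 'a fps" where
  "Ef xs = Abs_fps (\<lambda>m. (-1)^m * elem (int m) xs)"
definition lin :: "'a::comm_ring_1 \<Rightarrow> 'a fps" where
  "lin c = 1 - fps_const c * fps_X"
definition Qf :: "'a::comm_ring_1 list \<Rightarrow> 'a fps" where
  "Qf xs = prod_list (map lin xs)"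
definition Pf :: "nat \<Rightarrow> 'a::comm_ring_1 \<Rightarrow> 'a fps" where
  "Pf r c = Abs_fps (\<lambda>d. of_nat ((d + r) choose r) * c^d)"

lemma lin_0 [simp]: "lin c $ 0 = 1" by (simp add: lin_def)

lemma lin_nth: "(f * lin c) $ n = f $ n - c * (if n = 0 then 0 else f $ (n - 1))"
proof -
  have "f * lin c = f - fps_const c * (fps_X * f)" by (simp add: lin_def algebra_simps)
  then show ?thesis by simp
qed

lemma Pf_step: "Pf (Suc r) c * lin c = Pf r c"
proof (rule fps_ext)
  fix n
  show "(Pf (Suc r) c * lin c) $ n = Pf r c $ n"
  proof (cases n)
    case 0 then show ?thesis by (simp add: lin_nth Pf_def binomial_eq_0)
  next
    case (Suc k)
    have "Suc k + Suc r choose Suc r = (k + Suc r choose r) + (k + Suc r choose Suc r)"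
      by simp
    then have "of_nat (Suc k + Suc r choose Suc r) * c ^ Suc k - c * (of_nat (k + Suc r choose Suc r) * c ^ k)
       = of_nat (Suc k + r choose r) * (c ^ Suc k :: 'a)"
      by (simp add: algebra_simps)
    then show ?thesis using Suc by (simp add: lin_nth Pf_def)
  qed
qed

lemma Pf_0: "Pf 0 c * lin c = 1"
proof (rule fps_ext)
  fix n show "(Pf 0 c * lin c) $ n = (1::'a fps) $ n"
    by (cases n) (simp_all add: lin_nth Pf_def)
qed

lemma Pf_inv: "Pf r c * lin c ^ Suc r = 1"
proof (induction r)
  case 0 then show ?case by (simp add: Pf_0)
next
  case (Suc r)
  have "Pf (Suc r) c * lin c ^ Suc (Suc r) = (Pf (Suc r) c * lin c) * lin c ^ Suc r"
    by (simp add: algebra_simps)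
  also have "\<dots> = 1" using Suc by (simp add: Pf_step)
  finally show ?case .
qed

lemma Hf_nil: "Hf [] = 1"
  by (rule fps_ext) (simp add: Hf_def hom_nil)

lemma Hf_snoc: "Hf (xs @ [c]) = Pf 0 c * Hf xs"
  by (rule fps_ext) (simp add: Hf_def Pf_def hom_snoc fps_mult_nth atLeast0AtMost)

lemma Hf_Qf: "Hf xs * Qf xs = 1"
proof (induction xs rule: rev_induct)
  case Nil then show ?case by (simp add: Hf_nil Qf_def)
next
  case (snoc c xs)
  have "Hf (xs @ [c]) * Qf (xs @ [c]) = (Pf 0 c * lin c) * (Hf xs * Qf xs)"
    by (simp add: Hf_snoc Qf_def algebra_simps)
  then show ?case using snoc by (simp add: Pf_0)
qed

lemma Ef_nil: "Ef [] = 1"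
proof (rule fps_ext)
  fix n show "Ef [] $ n = (1::'a fps) $ n"
    by (cases n) (simp_all add: Ef_def elem_0 elem_big del: of_nat_Suc)
qed

lemma Ef_snoc: "Ef (xs @ [c]) = Ef xs * lin c"
proof (rule fps_ext)
  fix n show "Ef (xs @ [c]) $ n = (Ef xs * lin c) $ n"
  proof (cases n)
    case 0 then show ?thesis by (simp add: lin_nth Ef_def elem_0)
  next
    case (Suc k)
    have "elem (int (Suc k)) (xs @ [c]) = elem (int (Suc k)) xs + c * elem (int k) xs"
      by (rule elem_snoc)
    moreover have "(Ef xs * lin c) $ Suc k = Ef xs $ Suc k - c * Ef xs $ k" by (simp add: lin_nth)
    ultimately show ?thesis using Suc by (simp add: Ef_def algebra_simps del: of_nat_Suc)
  qed
qed

lemma Ef_Qf: "Ef xs = Qf xs"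
  by (induction xs rule: rev_induct) (simp_all add: Ef_nil Ef_snoc Qf_def)

lemma rep_list_Suc: "rep_list (Suc n) y mu = rep_list n y mu @ replicate (mu (Suc n)) (y (Suc n))"
  by (simp add: rep_list_def)

lemma length_rep_list: "length (rep_list n y mu) = sum mu {1..n}"
  by (induction n) (simp_all add: rep_list_def[of 0] rep_list_Suc sum.nat_ivl_Suc')

lemma prod_rep_list: "prod_list (map f (rep_list n y mu)) = (\<Prod>q\<in>{1..n}. f (y q) ^ mu q)"
  by (induction n) (simp_all add: rep_list_def[of 0] rep_list_Suc prod.nat_ivl_Suc' mult.commute)

lemma sum_split1: "1 \<le> q \<Longrightarrow> sum (kappa::nat\<Rightarrow>nat) {1..q} = sum kappa {1..<q} + kappa q"
  by (metis atLeastLessThanSuc_atLeastAtMost sum.atLeastLessThan_Suc)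

lemma qr_ex1:
  fixes kappa :: "nat \<Rightarrow> nat" and n p :: nat
  assumes "1 \<le> p" "p \<le> sum kappa {1..n}"
  shows "\<exists>!qr. (case qr of (q, r) \<Rightarrow> 1 \<le> q \<and> q \<le> n \<and> 1 \<le> r \<and> r \<le> kappa q \<and>
                      p = sum kappa {1..<q} + r)"
proof -
  define q where "q = (LEAST q. p \<le> sum kappa {1..q})"
  have pq: "p \<le> sum kappa {1..q}" unfolding q_def by (rule LeastI[of _ n]) (use assms in auto)
  have qn: "q \<le> n" unfolding q_def by (rule Least_le) (use assms in auto)
  have q1: "1 \<le> q" using pq assms by (cases q) auto
  have "\<not> p \<le> sum kappa {1..q - 1}"
  proof
    assume "p \<le> sum kappa {1..q - 1}"
    then have "q \<le> q - 1" unfolding q_def by (rule Least_le)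
    with q1 show False by simp
  qed
  moreover have "{1..q - 1} = {1..<q}" using q1 by auto
  ultimately have lt: "sum kappa {1..<q} < p" by simp
  define r where "r = p - sum kappa {1..<q}"
  have ex: "1 \<le> q \<and> q \<le> n \<and> 1 \<le> r \<and> r \<le> kappa q \<and> p = sum kappa {1..<q} + r"
  proof -
    have "sum kappa {1..q} = sum kappa {1..<q} + kappa q" by (rule sum_split1[OF q1])
    then show ?thesis using lt pq q1 qn unfolding r_def by (intro conjI) linarith+
  qed
  have uniq: "q1 = q2 \<and> r1 = r2" if
    A: "1 \<le> q1 \<and> q1 \<le> n \<and> 1 \<le> r1 \<and> r1 \<le> kappa q1 \<and> p = sum kappa {1..<q1} + r1" and
    B: "1 \<le> q2 \<and> q2 \<le> n \<and> 1 \<le> r2 \<and> r2 \<le> kappa q2 \<and> p = sum kappa {1..<q2} + r2" for q1 r1 q2 r2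
  proof -
    have *: False if "1 \<le> a" "a < b" "r1 \<le> kappa a" "p = sum kappa {1..<a} + r1"
      "1 \<le> r2" "p = sum kappa {1..<b} + r2" for a b r1 r2
    proof -
      have sub: "{1..a} \<subseteq> {1..<b}" using that(2) by auto
      have "sum kappa {1..a} \<le> sum kappa {1..<b}" using sum_mono2[OF finite_atLeastLessThan sub, of kappa] by simp
      then show False using sum_split1[OF that(1), of kappa] that by linarith
    qed
    have "q1 = q2"
    proof (rule ccontr)
      assume "q1 \<noteq> q2"
      then have "q1 < q2 \<or> q2 < q1" by auto
      then show False
      proof
        assume "q1 < q2" then show False using A B by (intro *[of q1 q2 r1 r2]) blast+
      next
        assume "q2 < q1" then show False using A B by (intro *[of q2 q1 r2 r1]) blast+
      qed
    qed
    then show ?thesis using A B by (metis add_left_cancel)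
  qed
  show ?thesis
  proof (rule ex1I[of _ "(q, r)"])
    show "case (q, r) of (q, r) \<Rightarrow> 1 \<le> q \<and> q \<le> n \<and> 1 \<le> r \<and> r \<le> kappa q \<and> p = sum kappa {1..<q} + r"
      unfolding prod.case by (rule ex)
  next
    fix x assume "case x of (q, r) \<Rightarrow> 1 \<le> q \<and> q \<le> n \<and> 1 \<le> r \<and> r \<le> kappa q \<and> p = sum kappa {1..<q} + r"
    moreover obtain a b where x: "x = (a, b)" by (cases x)
    ultimately have "1 \<le> a \<and> a \<le> n \<and> 1 \<le> b \<and> b \<le> kappa a \<and> p = sum kappa {1..<a} + b"
      by (simp only: prod.case)
    from uniq[OF this ex] show "x = (q, r)" using x by simp
  qed
qed

lemma qr_props:
  fixes kappa :: "nat \<Rightarrow> nat" and n p :: nat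
  assumes "1 \<le> p" "p \<le> sum kappa {1..n}" "qr n kappa p = (q, r)"
  shows "1 \<le> q \<and> q \<le> n \<and> 1 \<le> r \<and> r \<le> kappa q"
proof -
  have "case qr n kappa p of (q, r) \<Rightarrow> 1 \<le> q \<and> q \<le> n \<and> 1 \<le> r \<and> r \<le> kappa q \<and>
                      p = sum kappa {1..<q} + r"
    unfolding qr_def by (rule theI'[OF qr_ex1[OF assms(1,2)]])
  then show ?thesis using assms(3) by simp
qed

lemma Qf_split:
  assumes q: "q \<in> {1..n}" and r: "r \<le> kappa q"
  shows "Qf (rep_list n y kappa) = Qf (rep_list n y (kappa(q := kappa q - r))) * lin (y q) ^ r"
proof -
  have "Qf (rep_list n y kappa) = (\<Prod>q'\<in>{1..n}. lin (y q') ^ kappa q')"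
    by (simp add: Qf_def prod_rep_list)
  also have "\<dots> = lin (y q) ^ kappa q * (\<Prod>q'\<in>{1..n} - {q}. lin (y q') ^ kappa q')"
    using q by (simp add: prod.remove)
  also have "(\<Prod>q'\<in>{1..n} - {q}. lin (y q') ^ kappa q') = (\<Prod>q'\<in>{1..n} - {q}. lin (y q') ^ (kappa(q := kappa q - r)) q')"
    by (intro prod.cong) auto
  also have "lin (y q) ^ kappa q = lin (y q) ^ (kappa q - r) * lin (y q) ^ r"
    using r by (simp add: power_add[symmetric])
  also have "(\<Prod>q'\<in>{1..n}. lin (y q') ^ (kappa(q := kappa q - r)) q') =
      lin (y q) ^ (kappa q - r) * (\<Prod>q'\<in>{1..n} - {q}. lin (y q') ^ (kappa(q := kappa q - r)) q')"
    using q by (simp add: prod.remove)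
  moreover have "Qf (rep_list n y (kappa(q := kappa q - r))) = (\<Prod>q'\<in>{1..n}. lin (y q') ^ (kappa(q := kappa q - r)) q')"
    by (simp add: Qf_def prod_rep_list)
  ultimately show ?thesis by (simp add: algebra_simps)
qed

lemma EH_eq:
  assumes q: "q \<in> {1..n}" and r: "1 \<le> r" "r \<le> kappa q"
  shows "Ef (rep_list n y (kappa(q := kappa q - r))) * Hf (rep_list n y kappa) = Pf (r - 1) (y q)"
proof -
  define E where "E = Ef (rep_list n y (kappa(q := kappa q - r)))"
  define H where "H = Hf (rep_list n y kappa)"
  define P where "P = Pf (r - 1) (y q)"
  have P: "P * lin (y q) ^ r = 1" using Pf_inv[of "r - 1" "y q"] r by (simp add: P_def)
  have "E * H * lin (y q) ^ r = H * Qf (rep_list n y kappa)"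
    by (simp add: E_def H_def Ef_Qf Qf_split[where q=q and n=n and r=r and kappa=kappa and y=y, OF q r(2)] algebra_simps)
  also have "\<dots> = 1" by (simp add: H_def Hf_Qf)
  finally have EH: "E * H * lin (y q) ^ r = 1" .
  have "E * H = E * H * (P * lin (y q) ^ r)" using P by simp
  also have "\<dots> = (E * H * lin (y q) ^ r) * P" by (simp add: algebra_simps)
  also have "\<dots> = P" using EH by simp
  finally show ?thesis by (simp add: E_def H_def P_def)
qed

lemma hom_neg: "m < 0 \<Longrightarrow> hom m xs = 0" by (simp add: hom_def)
lemma elem_neg: "m < 0 \<Longrightarrow> elem m xs = 0" by (simp add: elem_def)

theorem proposition5p2:
  fixes n :: nat and kappa lam :: "nat \<Rightarrow> nat" and y :: "nat \<Rightarrow> 'a::comm_ring_1"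
  defines "N \<equiv> sum kappa {1..n}"
  assumes "is_partition_len_le N lam"
  shows "\<forall>j\<in>{1..N}. \<forall>p\<in>{1..N}.
           Gmat n lam y kappa j p =
           (\<Sum>k=1..N. JT lam (rep_list n y kappa) j k * Mmat n y kappa k p)"
proof (intro ballI)
  fix j p assume j: "j \<in> {1..N}" and p: "p \<in> {1..N}"
  have Ns: "sum kappa {1..n} = N" "sum kappa {Suc 0..n} = N" by (simp_all add: N_def)
  obtain q r where qrp: "qr n kappa p = (q, r)" by (cases "qr n kappa p")
  have qr1: "1 \<le> q \<and> q \<le> n \<and> 1 \<le> r \<and> r \<le> kappa q"
  proof -
    have "1 \<le> p" "p \<le> sum kappa {1..n}" using p Ns by auto
    then show ?thesis by (rule qr_props[OF _ _ qrp])
  qed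
  then have qn: "q \<in> {1..n}" and r1: "1 \<le> r" and rq: "r \<le> kappa q" by auto
  define kappa' where "kappa' = kappa(q := kappa q - r)"
  define x where "x = rep_list n y kappa"
  define x' where "x' = rep_list n y kappa'"
  define m where "m = N + lam j - j"
  define D where "D = int m - int r + 1"
  have mi: "int m = int N + int (lam j) - int j" using j by (simp add: m_def)
  have lenx': "length x' = N - r"
  proof -
    have "sum kappa {1..n} = kappa q + sum kappa ({1..n} - {q})" using qn by (simp add: sum.remove)
    moreover have "sum kappa' {1..n} = kappa' q + sum kappa' ({1..n} - {q})" using qn by (simp add: sum.remove)
    moreover have "sum kappa' ({1..n} - {q}) = sum kappa ({1..n} - {q})"
      by (intro sum.cong) (auto simp: kappa'_def)
    ultimately show ?thesis using rq by (simp add: x'_def length_rep_list Ns kappa'_def)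
  qed
  have rN: "r \<le> N"
  proof -
    have "kappa q \<le> sum kappa {1..n}" using qn by (intro member_le_sum) auto
    then show ?thesis using rq Ns by simp
  qed
  define f where "f = (\<lambda>s::int. hom (D - s) x * ((-1) ^ nat s * elem s x'))"
  have f0: "f s = 0" if H: "s < 0 \<or> s > D \<or> s > int N - int r" for s
  proof -
    consider "s < 0" | "s > D" | "s \<ge> 0" "s > int N - int r" using H by (cases "s < 0") auto
    then show ?thesis
    proof cases
      case 1 then show ?thesis by (simp add: f_def elem_neg)
    next
      case 2 then show ?thesis by (simp add: f_def hom_neg)
    next
      case 3
      then have "elem (int (nat s)) x' = 0" using lenx' rN by (intro elem_big) linarith
      with 3 show ?thesis by (simp add: f_def)
    qed
  qed
  have "(\<Sum>k=1..N. JT lam x j k * Mmat n y kappa k p) = (\<Sum>k=1..N. f (int N - int k - int r + 1))"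
  proof (intro sum.cong refl)
    fix k assume k: "k \<in> {1..N}"
    have e: "int (lam j) - int j + int k = D - (int N - int k - int r + 1)"
      using mi by (simp add: D_def)
    show "JT lam x j k * Mmat n y kappa k p = f (int N - int k - int r + 1)"
      unfolding JT_def e by (simp add: Mmat_def Let_def qrp Ns f_def kappa'_def x'_def)
  qed
  also have "\<dots> = sum f {1 - int r .. int N - int r}"
  proof (rule sum.reindex_bij_witness[where i="\<lambda>s. nat (int N - int r + 1 - s)" and j="\<lambda>k. int N - int k - int r + 1"])
    fix k assume "k \<in> {1..N}" then show "nat (int N - int r + 1 - (int N - int k - int r + 1)) = k" by auto
  next
    fix k assume "k \<in> {1..N}" then show "int N - int k - int r + 1 \<in> {1 - int r..int N - int r}" by auto
  next
    fix s assume "s \<in> {1 - int r..int N - int r}"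
    then show "int N - int (nat (int N - int r + 1 - s)) - int r + 1 = s" by auto
  next
    fix s assume "s \<in> {1 - int r..int N - int r}"
    then show "nat (int N - int r + 1 - s) \<in> {1..N}" by auto
  qed simp
  also have "\<dots> = sum f ({1 - int r .. int N - int r} \<inter> {0..D})"
    by (rule sum.mono_neutral_right) (auto intro!: f0)
  also have "\<dots> = sum f {0..D}"
    by (rule sum.mono_neutral_left) (use r1 in \<open>auto intro!: f0\<close>)
  finally have R: "(\<Sum>k=1..N. JT lam x j k * Mmat n y kappa k p) = sum f {0..D}" .
  have G: "Gmat n lam y kappa j p = (if D \<ge> 0 then of_nat (m choose (r - 1)) * y q ^ nat D else 0)"
  proof -
    have "int N + int (lam j) - int j - int r + 1 = D" using mi by (simp add: D_def)
    then show ?thesis by (simp add: Gmat_def Let_def qrp Ns m_def)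
  qed
  show "Gmat n lam y kappa j p = (\<Sum>k=1..N. JT lam (rep_list n y kappa) j k * Mmat n y kappa k p)"
  proof (cases "D \<ge> 0")
    case False
    then show ?thesis using R G by (simp add: x_def)
  next
    case True
    have "sum f {0..D} = (\<Sum>i=0..nat D. Ef x' $ i * Hf x $ (nat D - i))"
    proof (rule sum.reindex_bij_witness[where i="\<lambda>i. int i" and j="\<lambda>s. nat s"])
      fix s assume s: "s \<in> {0..D}"
      then have e: "int (nat D - nat s) = D - s" using True by auto
      show "Ef x' $ nat s * Hf x $ (nat D - nat s) = f s"
        using s by (simp add: f_def Ef_def Hf_def e algebra_simps)
    qed (use True in auto)
    also have "\<dots> = (Ef x' * Hf x) $ nat D" by (simp add: fps_mult_nth)
    also have "Ef x' * Hf x = Pf (r - 1) (y q)"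
      unfolding x'_def x_def kappa'_def by (rule EH_eq[where q=q and n=n and r=r and kappa=kappa and y=y, OF qn r1 rq])
    also have "Pf (r - 1) (y q) $ nat D = of_nat (m choose (r - 1)) * y q ^ nat D"
    proof -
      have "nat D + (r - 1) = m" using True r1 by (simp add: D_def)
      then show ?thesis by (simp add: Pf_def)
    qed
    finally show ?thesis using R G True by (simp add: x_def)
  qed
qed

end
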